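(* Let $N\ge 1$ be an integer and let $\beta,\sigma,\gamma,\xi,\eta,D,R>0$. For $\mathbf{y}=(\mathbf{V}_1,\dots,\mathbf{V}_N,\mathbf{X}_1,\dots,\mathbf{X}_N)\in\mathbb{R}^{4N}$, with $\mathbf{V}_i=(V_{i1},V_{i2})$, $\mathbf{X}_i=(X_{i1},X_{i2})$, define $\mathbf{q}(\mathbf{y})=(\mathbf{q}_1,\mathbf{q}_2)$ by $$q_{1,ik}=\frac{\beta}{N}\sum_{j=1}^N\frac{V_{jk}-V_{ik}}{\left(1+\|\mathbf{X}_j-\mathbf{X}_i\|^2/R^2\right)^{\sigma}},\qquad q_{2,ik}=V_{ik},\qquad k=1,2,$$ and, for $r>0$ and $\mathbf{y},\mathbf{z}\in\mathbb{R}^{4N}$ (with position components $X_{ik}$ of $\mathbf{y}$ and $Z_{ik}$ of $\mathbf{z}$), define $\mathbf{p}(r,\mathbf{y},\mathbf{z})=(\mathbf{p}_1,\mathbf{p}_2)$ with $\mathbf{p}_2=0$ and $$p_{1,i1}=\sum_{j=1}^N\int_{-R}^{R}e^{-\frac{(X_{i2}-Z_{j2}-w)^2}{4rD}}\left(e^{-\frac{(X_{i1}-Z_{j1}-\sqrt{R^2-w^2})^2}{4rD}}-e^{-\frac{(X_{i1}-Z_{j1}+\sqrt{R^2-w^2})^2}{4rD}}\right)dw,$$ $$p_{1,i2}=\sum_{j=1}^N\int_{-R}^{R}e^{-\frac{(X_{i1}-Z_{j1}-w)^2}{4rD}}\left(e^{-\frac{(X_{i2}-Z_{j2}-\sqrt{R^2-w^2})^2}{4rD}}-e^{-\frac{(X_{i2}-Z_{j2}+\sqrt{R^2-w^2})^2}{4rD}}\right)dw.$$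 Let $C(r)=\dfrac{\gamma\xi e^{-\eta r}}{4\pi rD}$ for $r>0$, fix $\mathbf{y}_0\in\mathbb{R}^{4N}$, and consider the integral equation $$\mathbf{y}(t)=\mathbf{y}_0+\int_0^t\Big[\mathbf{q}(\mathbf{y}(\tau))+\mathbf{h}(t,\tau,\mathbf{y})\Big]d\tau,\qquad \mathbf{h}(t,\tau,\mathbf{y}):=\int_\tau^t C(s-\tau)\,\mathbf{p}(s-\tau,\mathbf{y}(s),\mathbf{y}(\tau))\,ds. \tag{E}$$ Let $a,b>0$, and let $M_1=\max\{\|\mathbf{q}(\mathbf{y})\|:\|\mathbf{y}-\mathbf{y}_0\|\le b\}$, let $M_2$ be the maximum of $\|\mathbf{h}(t,\tau,\mathbf{y})\|$ over $0\le\tau\le t\le a$ and continuous $\mathbf{y}$ with $\|\mathbf{y}(s)-\mathbf{y}_0\|\le b$, let $L_1>0$ be a Lipschitz constant of $\mathbf{q}$ on $\{\|\mathbf{y}-\mathbf{y}_0\|\le b\}$, and let $L_2>0$ be a constant such that for all $0\le\tau< s\le a$ and all $\mathbf{y}_1,\mathbf{y}_2$ with values in that ball, $$\|\mathbf{p}(s-\tau,\mathbf{y}_1(s),\mathbf{y}_1(\tau))-\mathbf{p}(s-\tau,\mathbf{y}_2(s),\mathbf{y}_2(\tau))\|\le\sqrt{4D(s-\tau)}\,L_2\big(\|\mathbf{y}_1(s)-\mathbf{y}_2(s)\|+\|\mathbf{y}_1(\tau)-\mathbf{y}_2(\tau)\|\big).$$ Let $M=\int_0^{+\infty}|C(z)|\sqrt{4Dz}\,dz$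 and $$T=\min\left[a,\frac{b}{M_1+M_2},\frac{1}{L_1+2L_2M}\right].$$ Then equation (E) has a unique solution on $[0,T]$ (in the class of continuous functions $\mathbf{y}:[0,T]\to\mathbb{R}^{4N}$ with $\sup_{0\le t\le T}\|\mathbf{y}(t)-\mathbf{y}_0\|\le b$).
   Context: Equation (E) is the integrated form of a hybrid model for $N$ particles in $\mathbb{R}^2$ with positions $\mathbf{X}_i$ and velocities $\mathbf{V}_i$, subject to Cucker–Smale-type alignment and to chemotaxis towards a signal $f$ solving $\partial_t f=D\Delta f+\xi\sum_j\chi_{B(\mathbf{X}_j,R)}-\eta f$ on $\mathbb{R}^2$ with $f(\cdot,0)=0$; the gradient of $f$ has been written explicitly via the heat kernel, giving the memory term $\mathbf{h}$. $\|\cdot\|$ is the Euclidean norm. *)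

theory Defs
  imports "HOL-Analysis.Analysis"
begin

text \<open>State vector y = (V, X) in R^{4N}: V = (V_1,...,V_N), X = (X_1,...,X_N), each V_i, X_i in R^2.
  The particle index set is the finite type 'n with N = CARD('n).  The norm on the product
  type is sqrt(norm V ^ 2 + norm X ^ 2), i.e. the Euclidean norm of R^{4N}.\<close>

type_synonym 'n state = "(real^2^'n) \<times> (real^2^'n)"

definition qfun :: "real \<Rightarrow> real \<Rightarrow> real \<Rightarrow> 'n::finite state \<Rightarrow> 'n state" where
  "qfun \<beta> \<sigma> R y =
     ((\<chi> i. \<chi> k. \<beta> / real CARD('n) *
        (\<Sum>j\<in>UNIV. (fst y $ j $ k - fst y $ i $ k) /
            (1 + (norm (snd y $ j - snd y $ i))^2 / R^2) powr \<sigma>)),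
      fst y)"

text \<open>The w-integral appearing in p: u is the coordinate difference entering with
  sqrt(R^2-w^2), v the one entering with w.\<close>
definition pker :: "real \<Rightarrow> real \<Rightarrow> real \<Rightarrow> real \<Rightarrow> real \<Rightarrow> real" where
  "pker D R r u v = integral {-R..R} (\<lambda>w.
      exp (- ((v - w)^2) / (4*r*D)) *
      (exp (- ((u - sqrt (R^2 - w^2))^2) / (4*r*D))
       - exp (- ((u + sqrt (R^2 - w^2))^2) / (4*r*D))))"

definition pfun :: "real \<Rightarrow> real \<Rightarrow> real \<Rightarrow> 'n::finite state \<Rightarrow> 'n state \<Rightarrow> 'n state" where
  "pfun D R r y z =
     ((\<chi> i. \<chi> k. if k = 1
         then (\<Sum>j\<in>UNIV. pker D R r (snd y $ i $ 1 - snd z $ j $ 1) (snd y $ i $ 2 - snd z $ j $ 2))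
         else (\<Sum>j\<in>UNIV. pker D R r (snd y $ i $ 2 - snd z $ j $ 2) (snd y $ i $ 1 - snd z $ j $ 1))),
      0)"

definition Cfun :: "real \<Rightarrow> real \<Rightarrow> real \<Rightarrow> real \<Rightarrow> real \<Rightarrow> real" where
  "Cfun \<gamma> \<xi> \<eta> D r = \<gamma> * \<xi> * exp (- \<eta> * r) / (4 * pi * r * D)"

definition hfun :: "real \<Rightarrow> real \<Rightarrow> real \<Rightarrow> real \<Rightarrow> real \<Rightarrow> real \<Rightarrow> real \<Rightarrow> (real \<Rightarrow> 'n::finite state) \<Rightarrow> 'n state" where
  "hfun \<gamma> \<xi> \<eta> D R t \<tau> y =
     integral {\<tau>..t} (\<lambda>s. Cfun \<gamma> \<xi> \<eta> D (s - \<tau>) *\<^sub>R pfun D R (s - \<tau>) (y s) (y \<tau>))"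

definition is_solution :: "real \<Rightarrow> real \<Rightarrow> real \<Rightarrow> real \<Rightarrow> real \<Rightarrow> real \<Rightarrow> real \<Rightarrow> real \<Rightarrow> real
    \<Rightarrow> 'n::finite state \<Rightarrow> (real \<Rightarrow> 'n state) \<Rightarrow> bool" where
  "is_solution \<beta> \<sigma> \<gamma> \<xi> \<eta> D R T b y0 y \<longleftrightarrow>
     continuous_on {0..T} y \<and>
     (\<forall>t\<in>{0..T}. norm (y t - y0) \<le> b) \<and>
     (\<forall>t\<in>{0..T}. ((\<lambda>\<tau>. qfun \<beta> \<sigma> R (y \<tau>) + hfun \<gamma> \<xi> \<eta> D R t \<tau> y) has_integral (y t - y0)) {0..t})"

end

theory Submission
  imports Defs
begin



lemma exp_neg_le_frac: fixes x::real assumes "x \<ge> 0" shows "exp (-x) \<le> 1/(1+x)"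
proof -
  have "1 + x \<le> exp x" by (rule exp_ge_add_one_self)
  then show ?thesis using assms by (simp add: exp_minus field_simps)
qed

lemma exp_neg_sq_le1: fixes t a :: real assumes "t > 0" shows "exp (- (a^2) / t) \<le> 1"
proof -
  have "- (a^2) / t \<le> 0" using assms by (simp add: divide_nonpos_pos)
  then show ?thesis by simp
qed

lemma pker_bound:
  assumes D: "D > 0" and r: "r > 0" and R: "R > 0"
  shows "\<bar>pker D R r u v\<bar> \<le> pi * sqrt (4*r*D)"
proof -
  define e where "e = 4*r*D"
  have e: "e > 0" using D r by (simp add: e_def)
  define f where "f = (\<lambda>w. exp (- ((v - w)^2) / (4*r*D)) *
      (exp (- ((u - sqrt (R^2 - w^2))^2) / (4*r*D))
       - exp (- ((u + sqrt (R^2 - w^2))^2) / (4*r*D))))"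
  define g where "g = (\<lambda>w::real. e / (e + (w - v)^2))"
  define G where "G = (\<lambda>w::real. sqrt e * arctan ((w - v) / sqrt e))"
  have fint: "f integrable_on {-R..R}"
    unfolding f_def using D r
    by (intro integrable_continuous_interval continuous_intros) auto
  have Gd: "(G has_real_derivative g w) (at w)" for w
    unfolding G_def g_def using e
    by (auto intro!: derivative_eq_intros simp: power_divide field_simps)
  have gint: "(g has_integral (G R - G (-R))) {-R..R}"
    using R by (intro fundamental_theorem_of_calculus) (auto intro: DERIV_subset[OF Gd] simp: has_real_derivative_iff_has_vector_derivative[symmetric])
  have le: "norm (f w) \<le> g w" for w
  proof -
    have a: "\<bar>exp (- ((u - sqrt (R^2 - w^2))^2) / (4*r*D)) - exp (- ((u + sqrt (R^2 - w^2))^2) / (4*r*D))\<bar> \<le> 1"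
    proof -
      have x1: "exp (- ((u - sqrt (R^2 - w^2))^2) / (4*r*D)) \<le> 1" "exp (- ((u + sqrt (R^2 - w^2))^2) / (4*r*D)) \<le> 1"
        using D r by (intro exp_neg_sq_le1; simp)+
      have x2: "exp (- ((u - sqrt (R^2 - w^2))^2) / (4*r*D)) > 0" "exp (- ((u + sqrt (R^2 - w^2))^2) / (4*r*D)) > 0"
        by simp_all
      show ?thesis using x1 x2 unfolding abs_le_iff by linarith
    qed
    have b: "exp (- ((v - w)^2) / (4*r*D)) \<le> g w"
    proof -
      have "exp (- ((v - w)^2) / (4*r*D)) = exp (- ((w - v)^2 / e))" by (simp add: e_def power2_commute)
      also have "\<dots> \<le> 1 / (1 + (w-v)^2/e)" by (rule exp_neg_le_frac) (use e in auto)
      also have "\<dots> = g w" using e by (simp add: g_def field_simps)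
      finally show ?thesis .
    qed
    have "norm (f w) = exp (- ((v - w)^2) / (4*r*D)) * \<bar>exp (- ((u - sqrt (R^2 - w^2))^2) / (4*r*D)) - exp (- ((u + sqrt (R^2 - w^2))^2) / (4*r*D))\<bar>"
      by (simp add: f_def abs_mult)
    also have "\<dots> \<le> exp (- ((v - w)^2) / (4*r*D)) * 1" by (intro mult_left_mono a) auto
    finally show ?thesis using b by simp
  qed
  have "\<bar>pker D R r u v\<bar> = norm (integral {-R..R} f)" by (simp add: pker_def f_def)
  also have "\<dots> \<le> integral {-R..R} g"
    by (rule integral_norm_bound_integral[OF fint]) (use gint le in auto)
  also have "\<dots> = G R - G (-R)" using gint by (simp add: integral_unique)
  also have "\<dots> \<le> sqrt e * pi"
  proof -
    have "arctan ((R - v) / sqrt e) < pi/2" "- (pi/2) < arctan ((-R - v) / sqrt e)"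
      using arctan_bounded by auto
    then have "arctan ((R - v) / sqrt e) - arctan ((-R - v) / sqrt e) \<le> pi" by linarith
    then show ?thesis unfolding G_def using e
      by (simp add: right_diff_distrib[symmetric] mult.commute)
  qed
  finally show ?thesis by (simp add: e_def mult.commute)
qed

lemma pker_cont:
  assumes D: "D > 0"
  shows "continuous_on ({0<..} \<times> UNIV) (\<lambda>(r, uv). pker D R r (fst uv) (snd uv))"
proof -
  have "continuous_on ({0<..} \<times> (UNIV::(real\<times>real) set)) (\<lambda>x. integral (cbox (-R) R) (\<lambda>w.
      exp (- ((snd (snd x) - w)^2) / (4*fst x*D)) *
      (exp (- ((fst (snd x) - sqrt (R^2 - w^2))^2) / (4*fst x*D))
       - exp (- ((fst (snd x) + sqrt (R^2 - w^2))^2) / (4*fst x*D)))))"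
    by (rule integral_continuous_on_param)
       (use D in \<open>auto simp: split_beta intro!: continuous_intros\<close>)
  then show ?thesis by (simp add: pker_def split_beta)
qed

lemma pker_cont_comp:
  assumes D: "D > 0" and c: "continuous_on S r" "continuous_on S u" "continuous_on S v"
    and pos: "\<And>x. x \<in> S \<Longrightarrow> r x > 0"
  shows "continuous_on S (\<lambda>x. pker D R (r x) (u x) (v x))"
proof -
  have "continuous_on S ((\<lambda>(r, uv). pker D R r (fst uv) (snd uv)) \<circ> (\<lambda>x. (r x, (u x, v x))))"
    by (rule continuous_on_compose[OF _ continuous_on_subset[OF pker_cont[OF D]]])
       (use c pos in \<open>auto intro!: continuous_intros\<close>)
  then show ?thesis by (simp add: o_def)
qed

lemma pfun_cont_comp:
  fixes Y Z :: "'a::topological_space \<Rightarrow> 'n::finite state"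
  assumes D: "D > 0" and c: "continuous_on S r" "continuous_on S Y" "continuous_on S Z"
    and pos: "\<And>x. x \<in> S \<Longrightarrow> r x > 0"
  shows "continuous_on S (\<lambda>x. pfun D R (r x) (Y x) (Z x))"
  unfolding pfun_def
proof (intro continuous_on_Pair continuous_on_const continuous_on_vec_lambda)
  fix i k
  show "continuous_on S (\<lambda>x. if k = 1
        then \<Sum>j\<in>UNIV. pker D R (r x) (snd (Y x) $ i $ 1 - snd (Z x) $ j $ 1) (snd (Y x) $ i $ 2 - snd (Z x) $ j $ 2)
        else \<Sum>j\<in>UNIV. pker D R (r x) (snd (Y x) $ i $ 2 - snd (Z x) $ j $ 2) (snd (Y x) $ i $ 1 - snd (Z x) $ j $ 1))"
    by (cases "k = 1") (simp_all, (intro continuous_on_sum pker_cont_comp[OF D] c pos continuous_intros; simp)+)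
qed

lemma norm_vec_le_sum: "norm (x::'a::real_normed_vector^'m::finite) \<le> (\<Sum>i\<in>UNIV. norm (x$i))"
  unfolding norm_vec_def by (rule L2_set_le_sum) simp

lemma pfun_bound:
  fixes y z :: "'n::finite state"
  assumes D: "D > 0" and r: "r > 0" and R: "R > 0"
  shows "norm (pfun D R r y z) \<le> 2 * real CARD('n) * real CARD('n) * (pi * sqrt (4*r*D))"
proof -
  let ?B = "pi * sqrt (4*r*D)"
  let ?N = "real CARD('n)"
  have sb: "\<bar>\<Sum>j\<in>UNIV. pker D R r (f j) (g j)\<bar> \<le> ?N * ?B" for f g :: "'n \<Rightarrow> real"
  proof -
    have "\<bar>\<Sum>j\<in>UNIV. pker D R r (f j) (g j)\<bar> \<le> (\<Sum>j\<in>(UNIV::'n set). \<bar>pker D R r (f j) (g j)\<bar>)"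
      by (rule sum_abs)
    also have "\<dots> \<le> (\<Sum>j\<in>(UNIV::'n set). ?B)"
      by (intro sum_mono pker_bound D r R)
    finally show ?thesis by simp
  qed
  define x where "x = fst (pfun D R r y z)"
  have comp: "\<bar>x $ i $ k\<bar> \<le> ?N * ?B" for i k
    unfolding x_def pfun_def using sb by simp
  have "norm (x $ i) \<le> 2 * (?N * ?B)" for i
  proof -
    have "norm (x $ i) \<le> (\<Sum>k\<in>(UNIV::2 set). \<bar>x $ i $ k\<bar>)" by (rule norm_le_l1_cart)
    also have "\<dots> \<le> (\<Sum>k\<in>(UNIV::2 set). ?N * ?B)" by (intro sum_mono comp)
    finally show ?thesis by simp
  qed
  then have "norm x \<le> ?N * (2 * (?N * ?B))"
    using order_trans[OF norm_vec_le_sum sum_mono[of UNIV "\<lambda>i. norm (x$i)" "\<lambda>i. 2 * (?N * ?B)"]] by simp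
  moreover have "norm (pfun D R r y z) = norm x"
    by (simp add: x_def pfun_def norm_Pair)
  ultimately show ?thesis by (simp add: mult_ac)
qed




lemma isqrt_int:
  assumes "0 \<le> c" "c \<le> d"
  shows "((\<lambda>r::real. 1 / sqrt r) has_integral (2 * sqrt d - 2 * sqrt c)) {c..d}"
proof (rule fundamental_theorem_of_calculus_interior[OF assms(2)])
  show "continuous_on {c..d} (\<lambda>r. 2 * sqrt r)" by (intro continuous_intros)
  show "((\<lambda>r. 2 * sqrt r) has_vector_derivative 1 / sqrt x) (at x)" if "x \<in> {c<..<d}" for x
  proof -
    have x: "x > 0" using that assms by auto
    have "((\<lambda>r. 2 * sqrt r) has_real_derivative 2 * (inverse (sqrt x) / 2)) (at x)"
      using DERIV_cmult[OF DERIV_real_sqrt[OF x], of 2] by simp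
    then show ?thesis by (simp add: has_real_derivative_iff_has_vector_derivative[symmetric] field_simps)
  qed
qed

lemma sqrt_diff_le: assumes "0 \<le> c" "c \<le> d" shows "sqrt d - sqrt c \<le> sqrt (d - c)"
  using sqrt_add_le_add_sqrt[of c "d - c"] assms by simp

lemma holder_cont:
  fixes f :: "real \<Rightarrow> 'b::metric_space"
  assumes K: "K \<ge> 0" and h: "\<And>x y. x \<in> S \<Longrightarrow> y \<in> S \<Longrightarrow> dist (f x) (f y) \<le> K * sqrt (dist x y)"
  shows "continuous_on S f"
  unfolding continuous_on_iff
proof (intro ballI allI impI)
  fix x e assume x: "x \<in> S" and e: "(0::real) < e"
  define d where "d = (e / (K + 1))^2"
  have d: "d > 0" using e K by (simp add: d_def)
  show "\<exists>d>0. \<forall>x'\<in>S. dist x' x < d \<longrightarrow> dist (f x') (f x) < e"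
  proof (intro exI[of _ d] conjI ballI impI d)
    fix y assume y: "y \<in> S" and dy: "dist y x < d"
    have "sqrt (dist y x) < e / (K + 1)"
      using dy e K unfolding d_def by (metis divide_pos_pos real_sqrt_abs real_sqrt_less_mono add_nonneg_pos zero_less_one abs_of_pos order_less_imp_le)
    then have "K * sqrt (dist y x) \<le> K * (e / (K+1))" using K by (intro mult_left_mono) auto
    also have "\<dots> < e" using K e by (simp add: field_simps)
    finally show "dist (f y) (f x) < e" using h[OF y x] by linarith
  qed
qed




locale setting =
  fixes \<beta> \<sigma> \<gamma> \<xi> \<eta> D R a b L1 L2 :: real
    and y0 :: "'n::finite state"
    and M1 M2 M T :: real
  assumes pos: "\<beta> > 0" "\<sigma> > 0" "\<gamma> > 0" "\<xi> > 0" "\<eta> > 0" "D > 0" "R > 0"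
    and ab: "a > 0" "b > 0"
    and L1: "L1 > 0"
      "\<forall>u\<in>cball y0 b. \<forall>v\<in>cball y0 b.
         norm (qfun \<beta> \<sigma> R u - qfun \<beta> \<sigma> R v) \<le> L1 * norm (u - v)"
    and L2: "L2 > 0"
      "\<forall>\<tau> s (y1 :: real \<Rightarrow> 'n state) y2.
         0 \<le> \<tau> \<and> \<tau> < s \<and> s \<le> a \<and> (\<forall>t\<in>{0..a}. y1 t \<in> cball y0 b \<and> y2 t \<in> cball y0 b) \<longrightarrow>
         norm (pfun D R (s - \<tau>) (y1 s) (y1 \<tau>) - pfun D R (s - \<tau>) (y2 s) (y2 \<tau>))
           \<le> sqrt (4 * D * (s - \<tau>)) * L2 * (norm (y1 s - y2 s) + norm (y1 \<tau> - y2 \<tau>))"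
  and M1_def: "M1 =  Sup ((\<lambda>u. norm (qfun \<beta> \<sigma> R u)) ` cball y0 b)"
    and M2_def: "M2 = Sup {norm (hfun \<gamma> \<xi> \<eta> D R t \<tau> y) | t \<tau> (y :: real \<Rightarrow> 'n state).
                   0 \<le> \<tau> \<and> \<tau> \<le> t \<and> t \<le> a \<and> continuous_on {0..a} y \<and>
                   (\<forall>s\<in>{0..a}. norm (y s - y0) \<le> b)}"
    and M_def: "M = integral {0..} (\<lambda>z. \<bar>Cfun \<gamma> \<xi> \<eta> D z\<bar> * sqrt (4 * D * z))"
    and T_def: "T = min a (min (b / (M1 + M2)) (1 / (L1 + 2 * L2 * M)))"
begin

definition KC :: real where
  "KC = \<gamma> * \<xi> * (2 * real CARD('n) * real CARD('n) * pi * sqrt (4*D)) / (4 * pi * D)"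

definition F :: "(real \<Rightarrow> 'n state) \<Rightarrow> real \<Rightarrow> real \<Rightarrow> 'n state" where
  "F y \<tau> r = Cfun \<gamma> \<xi> \<eta> D r *\<^sub>R pfun D R r (y (r + \<tau>)) (y \<tau>)"

abbreviation h :: "real \<Rightarrow> real \<Rightarrow> (real \<Rightarrow> 'n state) \<Rightarrow> 'n state" where "h t \<tau> y \<equiv> hfun \<gamma> \<xi> \<eta> D R t \<tau> y"
abbreviation q :: "'n state \<Rightarrow> 'n state" where "q u \<equiv> qfun \<beta> \<sigma> R u"
abbreviation C where "C r \<equiv> Cfun \<gamma> \<xi> \<eta> D r"

lemma KC_nonneg: "KC \<ge> 0"
  using pos by (simp add: KC_def)

lemma C_nonneg: "r \<ge> 0 \<Longrightarrow> C r \<ge> 0"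
  using pos by (simp add: Cfun_def)

lemma C_le: "r > 0 \<Longrightarrow> C r \<le> \<gamma> * \<xi> / (4 * pi * r * D)"
  using pos by (simp add: Cfun_def divide_right_mono)

lemma F0: "F y \<tau> 0 = 0"
  by (simp add: F_def Cfun_def)

lemma F_bound: assumes "r \<ge> 0" shows "norm (F y \<tau> r) \<le> KC / sqrt r"
proof (cases "r = 0")
  case True then show ?thesis by (simp add: F0)
next
  case False
  then have r: "r > 0" using assms by simp
  let ?N = "real CARD('n)"
  have "norm (F y \<tau> r) = C r * norm (pfun D R r (y (r + \<tau>)) (y \<tau>))"
    using C_nonneg[of r] r by (simp add: F_def)
  also have "\<dots> \<le> (\<gamma> * \<xi> / (4 * pi * r * D)) * (2 * ?N * ?N * (pi * sqrt (4*r*D)))"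
    by (intro mult_mono C_le r pfun_bound pos) (use pos r in auto)
  also have "\<dots> = KC / sqrt r"
  proof -
    have "sqrt (4*r*D) = sqrt (4*D) * sqrt r" by (simp add: real_sqrt_mult mult_ac)
    moreover have "sqrt r * sqrt r = r" using r by simp
    ultimately show ?thesis using r pos unfolding KC_def by (simp add: field_simps)
  qed
  finally show ?thesis .
qed

lemma h_rep: "h t \<tau> y = integral {0..t - \<tau>} (F y \<tau>)"
proof -
  have "integral {\<tau> - \<tau>..t - \<tau>} (\<lambda>x. (\<lambda>s. C (s - \<tau>) *\<^sub>R pfun D R (s - \<tau>) (y s) (y \<tau>)) (x + \<tau>))
      = integral {\<tau>..t} (\<lambda>s. C (s - \<tau>) *\<^sub>R pfun D R (s - \<tau>) (y s) (y \<tau>))"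
    by (rule integral_shift_real_ivl)
  then show ?thesis by (simp add: hfun_def F_def[abs_def])
qed

end



lemma spike_Ioc: fixes f :: "real \<Rightarrow> 'b::banach"
  assumes "0 \<le> c" shows "f integrable_on {0<..c} \<longleftrightarrow> f integrable_on {0..c}"
proof (rule integrable_spike_set_eq)
  show "negligible (({0<..c} - {0..c}) \<union> ({0..c} - {0<..c}))"
    by (rule negligible_subset[of "{0}"]) auto
qed

lemma isqrt_integrable: "0 \<le> c \<Longrightarrow> (\<lambda>r::real. K / sqrt r) integrable_on {0..c}"
  using has_integral_mult_right[OF isqrt_int[of 0 c], of K] by (auto simp: integrable_on_def)

context setting begin

lemma h_bound:
  assumes "0 \<le> \<tau>" "\<tau> \<le> t"
  shows "norm (h t \<tau> y) \<le> 2 * KC * sqrt (t - \<tau>)"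
proof (cases "F y \<tau> integrable_on {0..t - \<tau>}")
  case True
  have g: "((\<lambda>r. KC * (1 / sqrt r)) has_integral KC * (2 * sqrt (t - \<tau>) - 2 * sqrt 0)) {0..t-\<tau>}"
    using assms by (intro has_integral_mult_right isqrt_int) auto
  have "norm (h t \<tau> y) \<le> integral {0..t - \<tau>} (\<lambda>r. KC * (1 / sqrt r))"
    unfolding h_rep
    by (rule integral_norm_bound_integral[OF True]) (use g F_bound in \<open>auto simp: integrable_on_def\<close>)
  also have "\<dots> = 2 * KC * sqrt (t - \<tau>)" using integral_unique[OF g] by simp
  finally show ?thesis .
next
  case False
  then show ?thesis using KC_nonneg assms by (simp add: h_rep not_integrable_integral)
qed

lemma C_cont: "continuous_on {0<..} C"
  unfolding Cfun_def using pos by (intro continuous_intros) auto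

lemma F_cont:
  assumes y: "continuous_on UNIV y"
  shows "continuous_on {0<..} (F y \<tau>)"
  unfolding F_def[abs_def]
  by (intro continuous_intros C_cont pfun_cont_comp pos continuous_on_compose2[OF y]) auto

lemma F_int:
  assumes y: "continuous_on UNIV y" and c: "0 \<le> c"
  shows "F y \<tau> integrable_on {0..c}"
proof -
  have "F y \<tau> integrable_on {0<..c}"
  proof (rule measurable_bounded_by_integrable_imp_integrable)
    show "F y \<tau> \<in> borel_measurable (lebesgue_on {0<..c})"
      by (rule continuous_imp_measurable_on_sets_lebesgue[OF continuous_on_subset[OF F_cont[OF y]]]) auto
    show "(\<lambda>r. KC / sqrt r) integrable_on {0<..c}"
      using spike_Ioc[OF c] isqrt_integrable[OF c] by blast
    show "norm (F y \<tau> r) \<le> KC / sqrt r" if "r \<in> {0<..c}" for r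
      using F_bound that by auto
  qed auto
  then show ?thesis using spike_Ioc[OF c] by blast
qed

end



context setting begin

lemma F_cont_tau:
  assumes y: "continuous_on UNIV y" and r0: "r \<ge> 0"
  shows "isCont (\<lambda>\<tau>. F y \<tau> r) \<tau>0"
proof (cases "r > 0")
  case True
  have "continuous_on UNIV (\<lambda>\<tau>. F y \<tau> r)"
    unfolding F_def
    by (intro continuous_intros pfun_cont_comp pos continuous_on_compose2[OF y] True) auto
  then show ?thesis by (simp add: continuous_on_eq_continuous_at)
next
  case False
  then have "F y \<tau> r = 0" for \<tau> using r0 by (simp add: F_def Cfun_def)
  then show ?thesis by simp
qed

lemma h_alt:
  assumes "0 \<le> \<tau>" "\<tau> \<le> t"
  shows "h t \<tau> y = integral {0..t} (\<lambda>r. if r \<le> t-\<tau> then F y \<tau> r else 0)"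
proof -
  have eq: "{..t-\<tau>} \<inter> {0..t} = {0..t-\<tau>}" using assms by auto
  have "integral {0..t} (\<lambda>r. if r \<in> {..t-\<tau>} then F y \<tau> r else 0) = integral {0..t-\<tau>} (F y \<tau>)"
    using integral_restrict_Int[of "{0..t}" "{..t-\<tau>}" "F y \<tau>"] eq by (simp only: eq)
  then show ?thesis by (simp add: h_rep)
qed

lemma h_cont:
  assumes y: "continuous_on UNIV y"
  shows "continuous_on {0..t} (\<lambda>\<tau>. h t \<tau> y)"
proof (rule continuous_on_sequentiallyI)
  fix u a assume u: "\<forall>n. u n \<in> {0..t}" and a: "a \<in> {0..t}" and ua: "u \<longlonglongrightarrow> a"
  define G where "G \<tau> r = (if r \<le> t-\<tau> then F y \<tau> r else 0)" for \<tau> r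
  define S where "S = {0..t} - {t - a}"
  have negl: "negligible (({0..t} - S) \<union> (S - {0..t}))"
    by (rule negligible_subset[of "{t-a}"]) (auto simp: S_def)
  have hS: "h t \<tau> y = integral S (G \<tau>)" if "\<tau> \<in> {0..t}" for \<tau>
  proof -
    have "h t \<tau> y = integral {0..t} (G \<tau>)" using that h_alt by (simp add: G_def[abs_def])
    also have "\<dots> = integral S (G \<tau>)"
      by (rule integral_spike_set; rule negligible_subset[OF negl]) auto
    finally show ?thesis .
  qed
  have Gint: "G \<tau> integrable_on S" if "\<tau> \<in> {0..t}" for \<tau>
  proof -
    have "{..t-\<tau>} \<inter> {0..t} = {0..t-\<tau>}" using that by auto
    then have "(\<lambda>r. if r \<in> {..t-\<tau>} then F y \<tau> r else 0) integrable_on {0..t}"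
      unfolding integrable_restrict_Int using F_int[OF y] that by auto
    then have "G \<tau> integrable_on {0..t}" by (simp add: G_def[abs_def])
    then show ?thesis using integrable_spike_set_eq[OF negl] by blast
  qed
  have domint: "(\<lambda>r. KC / sqrt r) integrable_on S"
    using isqrt_integrable[of t KC] a integrable_spike_set_eq[OF negl] by auto
  have dom: "norm (G \<tau> r) \<le> KC / sqrt r" if "r \<in> S" for \<tau> r
    using that F_bound[of r y \<tau>] KC_nonneg by (auto simp: G_def S_def)
  have conv: "(\<lambda>n. G (u n) r) \<longlonglongrightarrow> G a r" if r: "r \<in> S" for r
  proof (cases "r < t - a")
    case True
    have ev: "eventually (\<lambda>n. u n < t - r) sequentially"
      using order_tendstoD(2)[OF ua, of "t - r"] True by simp
    have "(\<lambda>n. F y (u n) r) \<longlonglongrightarrow> F y a r"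
      by (rule isCont_tendsto_compose[OF F_cont_tau[OF y] ua]) (use r in \<open>auto simp: S_def\<close>)
    moreover have "eventually (\<lambda>n. F y (u n) r = G (u n) r) sequentially"
      using ev by eventually_elim (auto simp: G_def)
    ultimately have "(\<lambda>n. G (u n) r) \<longlonglongrightarrow> F y a r" by (rule Lim_transform_eventually)
    then show ?thesis using True by (simp add: G_def)
  next
    case False
    then have gt: "r > t - a" using r by (auto simp: S_def)
    have ev: "eventually (\<lambda>n. u n > t - r) sequentially"
      using order_tendstoD(1)[OF ua, of "t - r"] gt by simp
    have "eventually (\<lambda>n. 0 = G (u n) r) sequentially"
      using ev by eventually_elim (auto simp: G_def)
    then have "(\<lambda>n. G (u n) r) \<longlonglongrightarrow> 0" by (rule Lim_transform_eventually[OF tendsto_const])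
    then show ?thesis using gt by (simp add: G_def)
  qed
  have "(\<lambda>n. integral S (G (u n))) \<longlonglongrightarrow> integral S (G a)"
    by (rule dominated_convergence(2)[OF Gint domint dom conv]) (use u in auto)
  then show "(\<lambda>n. h t (u n) y) \<longlonglongrightarrow> h t a y"
    using hS u a by simp
qed

end



lemma norm_integral_const_bound:
  fixes f :: "real \<Rightarrow> 'b::euclidean_space"
  assumes f: "f integrable_on {a..b}" and ab: "a \<le> b" and B: "\<And>x. x \<in> {a..b} \<Longrightarrow> norm (f x) \<le> B"
  shows "norm (integral {a..b} f) \<le> (b - a) * B"
proof -
  have "norm (integral {a..b} f) \<le> integral {a..b} (\<lambda>x. B)"
    by (rule integral_norm_bound_integral[OF f]) (use B in auto)
  then show ?thesis using ab by simp
qed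

context setting begin

definition J :: "(real \<Rightarrow> 'n state) \<Rightarrow> real \<Rightarrow> 'n state" where
  "J y t = integral {0..t} (\<lambda>\<tau>. h t \<tau> y)"

lemma h_int: "continuous_on UNIV y \<Longrightarrow> (\<lambda>\<tau>. h t \<tau> y) integrable_on {0..t}"
  by (rule integrable_continuous_interval[OF h_cont])

lemma h_diff:
  assumes y: "continuous_on UNIV y" and "0 \<le> \<tau>" "\<tau> \<le> t'" "t' \<le> t"
  shows "norm (h t \<tau> y - h t' \<tau> y) \<le> 2 * KC * sqrt (t - t')"
proof -
  have Fi: "F y \<tau> integrable_on {0..t-\<tau>}" using F_int[OF y] assms by auto
  have "h t \<tau> y = h t' \<tau> y + integral {t'-\<tau>..t-\<tau>} (F y \<tau>)"
    unfolding h_rep using Henstock_Kurzweil_Integration.integral_combine[OF _ _ Fi, of "t'-\<tau>"] assms by simp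
  then have "norm (h t \<tau> y - h t' \<tau> y) = norm (integral {t'-\<tau>..t-\<tau>} (F y \<tau>))" by simp
  also have "\<dots> \<le> integral {t'-\<tau>..t-\<tau>} (\<lambda>r. KC * (1 / sqrt r))"
  proof (rule integral_norm_bound_integral)
    show "F y \<tau> integrable_on {t'-\<tau>..t-\<tau>}" by (rule integrable_subinterval_real[OF Fi]) (use assms in auto)
    show "(\<lambda>r. KC * (1 / sqrt r)) integrable_on {t'-\<tau>..t-\<tau>}"
      using has_integral_mult_right[OF isqrt_int[of "t'-\<tau>" "t-\<tau>"], of KC] assms by (auto simp: integrable_on_def)
    show "norm (F y \<tau> r) \<le> KC * (1 / sqrt r)" if "r \<in> {t'-\<tau>..t-\<tau>}" for r
      using F_bound[of r] that assms by auto
  qed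
  also have "\<dots> = KC * (2 * sqrt (t-\<tau>) - 2 * sqrt (t'-\<tau>))"
    using has_integral_mult_right[OF isqrt_int[of "t'-\<tau>" "t-\<tau>"], of KC] assms by (simp add: integral_unique)
  also have "\<dots> \<le> KC * (2 * sqrt (t - t'))"
    using sqrt_diff_le[of "t'-\<tau>" "t-\<tau>"] assms KC_nonneg by (intro mult_left_mono) auto
  finally show ?thesis by simp
qed

lemma J_holder:
  assumes y: "continuous_on UNIV y" and "0 \<le> t'" "t' \<le> t" "t \<le> T0"
  shows "norm (J y t - J y t') \<le> 4 * KC * T0 * sqrt (t - t')"
proof -
  have hi: "(\<lambda>\<tau>. h t \<tau> y) integrable_on {0..t}" by (rule h_int[OF y])
  have hi': "(\<lambda>\<tau>. h t' \<tau> y) integrable_on {0..t'}" by (rule h_int[OF y])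
  have hi1: "(\<lambda>\<tau>. h t \<tau> y) integrable_on {0..t'}" by (rule integrable_subinterval_real[OF hi]) (use assms in auto)
  have hi2: "(\<lambda>\<tau>. h t \<tau> y) integrable_on {t'..t}" by (rule integrable_subinterval_real[OF hi]) (use assms in auto)
  have "J y t = integral {0..t'} (\<lambda>\<tau>. h t \<tau> y) + integral {t'..t} (\<lambda>\<tau>. h t \<tau> y)"
    unfolding J_def using Henstock_Kurzweil_Integration.integral_combine[OF _ _ hi, of t'] assms by simp
  then have "J y t - J y t' = integral {0..t'} (\<lambda>\<tau>. h t \<tau> y - h t' \<tau> y) + integral {t'..t} (\<lambda>\<tau>. h t \<tau> y)"
    unfolding J_def by (simp add: integral_diff[OF hi1 hi'])
  then have "norm (J y t - J y t') \<le> norm (integral {0..t'} (\<lambda>\<tau>. h t \<tau> y - h t' \<tau> y)) + norm (integral {t'..t} (\<lambda>\<tau>. h t \<tau> y))"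
    by (simp add: norm_triangle_ineq)
  also have "\<dots> \<le> (t' - 0) * (2 * KC * sqrt (t - t')) + (t - t') * (2 * KC * sqrt T0)"
  proof (rule add_mono)
    show "norm (integral {0..t'} (\<lambda>\<tau>. h t \<tau> y - h t' \<tau> y)) \<le> (t' - 0) * (2 * KC * sqrt (t - t'))"
      by (rule norm_integral_const_bound) (use assms hi1 hi' h_diff[OF y] in \<open>auto intro: integrable_diff\<close>)
    show "norm (integral {t'..t} (\<lambda>\<tau>. h t \<tau> y)) \<le> (t - t') * (2 * KC * sqrt T0)"
    proof (rule norm_integral_const_bound[OF hi2])
      fix \<tau> assume "\<tau> \<in> {t'..t}"
      then have "norm (h t \<tau> y) \<le> 2 * KC * sqrt (t - \<tau>)" using h_bound assms by auto
      also have "\<dots> \<le> 2 * KC * sqrt T0" using \<open>\<tau> \<in> {t'..t}\<close> assms KC_nonneg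
        by (intro mult_left_mono) auto
      finally show "norm (h t \<tau> y) \<le> 2 * KC * sqrt T0" .
    qed (use assms in auto)
  qed
  also have "\<dots> \<le> T0 * (2 * KC * sqrt (t - t')) + (sqrt (t - t') * sqrt T0) * (2 * KC * sqrt T0)"
  proof (rule add_mono)
    show "(t' - 0) * (2 * KC * sqrt (t - t')) \<le> T0 * (2 * KC * sqrt (t - t'))"
      using assms KC_nonneg by (intro mult_right_mono) auto
    have "t - t' = sqrt (t - t') * sqrt (t - t')" using assms by simp
    also have "\<dots> \<le> sqrt (t - t') * sqrt T0" using assms by (intro mult_left_mono) auto
    finally show "(t - t') * (2 * KC * sqrt T0) \<le> (sqrt (t - t') * sqrt T0) * (2 * KC * sqrt T0)"
      using KC_nonneg assms by (intro mult_right_mono) auto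
  qed
  also have "\<dots> = 4 * KC * T0 * sqrt (t - t')"
    using assms by (simp add: algebra_simps)
  finally show ?thesis .
qed

lemma J_cont:
  assumes y: "continuous_on UNIV y" and T0: "0 \<le> T0"
  shows "continuous_on {0..T0} (J y)"
proof (rule holder_cont[of "4 * KC * T0"])
  show "0 \<le> 4 * KC * T0" using KC_nonneg T0 by simp
  fix x z assume x: "x \<in> {0..T0}" and z: "z \<in> {0..T0}"
  show "dist (J y x) (J y z) \<le> 4 * KC * T0 * sqrt (dist x z)"
  proof (cases "z \<le> x")
    case True
    then show ?thesis using J_holder[OF y, of z x T0] x z by (simp add: dist_norm)
  next
    case False
    then show ?thesis using J_holder[OF y, of x z T0] x z by (simp add: dist_norm norm_minus_commute dist_commute abs_minus_commute)
  qed
qed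

end



context setting begin

definition gM :: "real \<Rightarrow> real" where
  "gM z = \<bar>C z\<bar> * sqrt (4 * D * z)"

definition KG :: real where "KG = \<gamma> * \<xi> * sqrt (4 * D) / (4 * pi * D)"

lemma KG_pos: "KG > 0" using pos by (simp add: KG_def)

lemma gM_nonneg: "z \<ge> 0 \<Longrightarrow> gM z \<ge> 0" using pos by (simp add: gM_def)

lemma gM_eq: assumes "r > 0" shows "gM r = KG * exp (- \<eta> * r) / sqrt r"
proof -
  have "sqrt (4*D*r) = sqrt (4*D) * sqrt r" by (simp add: real_sqrt_mult)
  moreover have "sqrt r * sqrt r = r" using assms by simp
  moreover have "C r \<ge> 0" using C_nonneg assms by simp
  ultimately show ?thesis using assms pos unfolding gM_def KG_def Cfun_def
    by (simp add: field_simps)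
qed

lemma gM_bound1: assumes "r \<ge> 0" shows "gM r \<le> KG / sqrt r"
proof (cases "r = 0")
  case True then show ?thesis by (simp add: gM_def)
next
  case False
  then have r: "r > 0" using assms by simp
  have "exp (- \<eta> * r) \<le> 1" using pos r by simp
  then show ?thesis using gM_eq[OF r] KG_pos r by (simp add: divide_right_mono)
qed

lemma gM_bound2: assumes "r \<ge> 1" shows "gM r \<le> KG * exp (- \<eta> * r)"
proof -
  have r: "r > 0" using assms by simp
  have "1 \<le> sqrt r" using assms by simp
  then have "KG * exp (- \<eta> * r) / sqrt r \<le> KG * exp (- \<eta> * r) / 1"
    using KG_pos by (intro divide_left_mono) auto
  then have "KG * exp (- \<eta> * r) / sqrt r \<le> KG * exp (- \<eta> * r)" by simp
  then show ?thesis using gM_eq[OF r] by simp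
qed

lemma gM_cont: "continuous_on {0<..} gM"
  unfolding gM_def[abs_def] by (intro continuous_intros C_cont)

lemma gM_meas: "S \<subseteq> {0<..} \<Longrightarrow> S \<in> sets lebesgue \<Longrightarrow> gM \<in> borel_measurable (lebesgue_on S)"
  by (rule continuous_imp_measurable_on_sets_lebesgue[OF continuous_on_subset[OF gM_cont]])

lemma gM_int: assumes c: "0 \<le> c" shows "gM integrable_on {0..c}"
proof -
  have "gM integrable_on {0<..c}"
    by (rule measurable_bounded_by_integrable_imp_integrable[OF gM_meas, of _ "\<lambda>r. KG / sqrt r"])
       (use spike_Ioc[OF c] isqrt_integrable[OF c] gM_bound1 gM_nonneg in auto)
  then show ?thesis using spike_Ioc[OF c] by blast
qed

lemma gM_int_inf: "gM integrable_on {0..}"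
proof -
  define d where "d r = (if r \<in> {..1} then KG / sqrt r else 0) + KG * exp (- \<eta> * r)" for r
  have d1: "(\<lambda>r. if r \<in> {..1} then KG / sqrt r else 0) integrable_on {0<..}"
  proof -
    have "{..1} \<inter> {0<..} = {0<..(1::real)}" by auto
    then show ?thesis unfolding integrable_restrict_Int
      using spike_Ioc[of 1] isqrt_integrable[of 1 KG] by auto
  qed
  have d2: "(\<lambda>r. KG * exp (- \<eta> * r)) integrable_on {0<..}"
  proof -
    have "(\<lambda>r. exp (- \<eta> * r)) integrable_on {0..}" using pos by (intro integrable_on_exp_minus_to_infinity) auto
    then have "(\<lambda>r. exp (- \<eta> * r)) integrable_on {0<..}"
      by (rule integrable_spike_set) (auto intro: negligible_subset[of "{0}"])
    from integrable_cmul[OF this, of KG] show ?thesis by simp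
  qed
  have "gM integrable_on {0<..}"
  proof (rule measurable_bounded_by_integrable_imp_integrable[OF gM_meas, of _ d])
    show "d integrable_on {0<..}" unfolding d_def[abs_def] by (rule integrable_add[OF d1 d2])
    show "norm (gM r) \<le> d r" if "r \<in> {0<..}" for r
    proof (cases "r \<le> 1")
      case True
      have e: "0 \<le> KG * exp (- \<eta> * r)" using KG_pos by simp
      have n: "norm (gM r) = gM r" using gM_nonneg[of r] that by simp
      have "d r = KG / sqrt r + KG * exp (- \<eta> * r)" using True by (simp add: d_def)
      moreover have "gM r \<le> KG / sqrt r" using gM_bound1[of r] that by simp
      ultimately show ?thesis using n e by linarith
    next
      case False
      then show ?thesis using gM_bound2[of r] gM_nonneg[of r] by (simp add: d_def)
    qed
  qed auto
  then show ?thesis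
    by (rule integrable_spike_set) (auto intro: negligible_subset[of "{0}"])
qed

lemma M_eq: "M = integral {0..} gM"
  by (simp add: M_def gM_def[abs_def])

lemma M_nonneg: "M \<ge> 0"
  unfolding M_eq by (rule integral_nonneg[OF gM_int_inf]) (simp add: gM_nonneg)

lemma gM_mono_int: assumes "0 \<le> c" "c \<le> T0" shows "integral {0..c} gM \<le> integral {0..T0} gM"
  by (rule integral_subset_le) (use assms gM_int gM_nonneg in auto)

lemma gM_int_nonneg: "integral {0..c} gM \<ge> 0"
  by (cases "0 \<le> c") (auto intro!: integral_nonneg gM_int simp: gM_nonneg)

lemma M_strict: assumes T0: "T0 > 0" shows "integral {0..T0} gM < M"
proof -
  have "gM absolutely_integrable_on {0..}"
    by (rule nonnegative_absolutely_integrable_1[OF gM_int_inf]) (simp add: gM_nonneg)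
  then have "gM absolutely_integrable_on {T0..}"
    by (rule set_integrable_subset) (use T0 in auto)
  then have i1: "gM integrable_on {T0..}" by (simp add: absolutely_integrable_on_def)
  have "(gM has_integral (integral {0..T0} gM + integral {T0..} gM)) ({0..T0} \<union> {T0..})"
    by (rule has_integral_Un) (use gM_int[of T0] T0 i1 in \<open>auto intro: negligible_subset[of "{T0}"]\<close>)
  moreover have "{0..T0} \<union> {T0..} = {0..}" using T0 by auto
  ultimately have Meq: "M = integral {0..T0} gM + integral {T0..} gM"
    unfolding M_eq by (simp add: integral_unique)
  define c0 where "c0 = KG * exp (- \<eta> * (T0 + 1)) / sqrt (T0 + 1)"
  have c0: "c0 > 0" using KG_pos T0 by (simp add: c0_def)
  have i2: "gM integrable_on {T0..T0+1}"
    by (rule integrable_subinterval_real[OF gM_int[of "T0+1"]]) (use T0 in auto)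
  have "c0 = integral {T0..T0+1} (\<lambda>r. c0)" by simp
  also have "\<dots> \<le> integral {T0..T0+1} gM"
  proof (rule integral_le[OF _ i2])
    show "c0 \<le> gM r" if r: "r \<in> {T0..T0+1}" for r
    proof -
      have rp: "r > 0" using r T0 by auto
      have "exp (- \<eta> * (T0 + 1)) \<le> exp (- \<eta> * r)" using r pos by simp
      moreover have "1 / sqrt (T0 + 1) \<le> 1 / sqrt r" using r rp by (simp add: frac_le)
      ultimately have "KG * exp (- \<eta> * (T0 + 1)) * (1 / sqrt (T0 + 1)) \<le> KG * exp (- \<eta> * r) * (1 / sqrt r)"
        using KG_pos T0 by (intro mult_mono) auto
      then show ?thesis using gM_eq[OF rp] by (simp add: c0_def)
    qed
  qed (rule integrable_const_ivl)
  also have "\<dots> \<le> integral {T0..} gM"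
    by (rule integral_subset_le) (use i1 i2 gM_nonneg T0 in auto)
  finally show ?thesis using Meq c0 by simp
qed

end



context setting begin

lemma q_lip: "u \<in> cball y0 b \<Longrightarrow> v \<in> cball y0 b \<Longrightarrow> norm (q u - q v) \<le> L1 * norm (u - v)"
  using L1(2) by blast

lemma q_cont: "continuous_on (cball y0 b) q"
  unfolding continuous_on_iff
proof (intro ballI allI impI)
  fix x e assume x: "x \<in> cball y0 b" and e: "(0::real) < e"
  show "\<exists>d>0. \<forall>x'\<in>cball y0 b. dist x' x < d \<longrightarrow> dist (q x') (q x) < e"
  proof (intro exI[of _ "e / L1"] conjI ballI impI)
    show "e / L1 > 0" using e L1 by simp
    fix z assume z: "z \<in> cball y0 b" and d: "dist z x < e / L1"
    have "dist (q z) (q x) \<le> L1 * dist z x" using q_lip[OF z x] by (simp add: dist_norm)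
    also have "\<dots> < L1 * (e / L1)" by (rule mult_strict_left_mono[OF d L1(1)])
    also have "\<dots> = e" using L1 by simp
    finally show "dist (q z) (q x) < e" .
  qed
qed

lemma q_bnd: "u \<in> cball y0 b \<Longrightarrow> norm (q u) \<le> norm (q y0) + L1 * b"
proof -
  assume u: "u \<in> cball y0 b"
  have "norm (q u) \<le> norm (q y0) + norm (q u - q y0)" by (rule norm_triangle_sub)
  also have "norm (q u - q y0) \<le> L1 * norm (u - y0)" using q_lip[OF u] ab by simp
  also have "\<dots> \<le> L1 * b" using u L1 by (intro mult_left_mono) (auto simp: dist_norm norm_minus_commute)
  finally show ?thesis by simp
qed

lemma q_le_M1: assumes "u \<in> cball y0 b" shows "norm (q u) \<le> M1"
  unfolding M1_def
  by (rule cSup_upper) (use assms q_bnd in \<open>auto intro!: bdd_aboveI2\<close>)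

lemma M1_nonneg: "M1 \<ge> 0"
  using q_le_M1[of y0] ab by (smt (verit) centre_in_cball norm_ge_zero)

definition Hset where "Hset = {norm (h t \<tau> y) | t \<tau> (y :: real \<Rightarrow> 'n state).
                   0 \<le> \<tau> \<and> \<tau> \<le> t \<and> t \<le> a \<and> continuous_on {0..a} y \<and>
                   (\<forall>s\<in>{0..a}. norm (y s - y0) \<le> b)}"

lemma M2_Hset: "M2 = Sup Hset" unfolding M2_def Hset_def ..

lemma Hset_bdd: "bdd_above Hset"
proof (rule bdd_aboveI)
  fix x assume "x \<in> Hset"
  then obtain t \<tau> y where x: "x = norm (h t \<tau> y)" and tt: "0 \<le> \<tau>" "\<tau> \<le> t" "t \<le> a"
    unfolding Hset_def by blast
  have "x \<le> 2 * KC * sqrt (t - \<tau>)" using h_bound tt x by simp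
  also have "\<dots> \<le> 2 * KC * sqrt a" using tt KC_nonneg by (intro mult_left_mono) auto
  finally show "x \<le> 2 * KC * sqrt a" .
qed

lemma h_le_M2:
  assumes "0 \<le> \<tau>" "\<tau> \<le> t" "t \<le> a" "continuous_on {0..a} y" "\<forall>s\<in>{0..a}. norm (y s - y0) \<le> b"
  shows "norm (h t \<tau> y) \<le> M2"
  unfolding M2_Hset
  by (rule cSup_upper[OF _ Hset_bdd]) (use assms in \<open>auto simp: Hset_def\<close>)

lemma M2_nonneg: "M2 \<ge> 0"
proof -
  have "norm (h 0 0 (\<lambda>_. y0)) \<le> M2"
    by (rule h_le_M2) (use ab in \<open>auto intro: continuous_intros\<close>)
  then show ?thesis by (smt (verit) norm_ge_zero)
qed

lemma T_nonneg: "T \<ge> 0"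
  unfolding T_def using ab M1_nonneg M2_nonneg L1 L2 M_nonneg by auto

lemma T_le_a: "T \<le> a" unfolding T_def by simp

lemma T_ball: "T * (M1 + M2) \<le> b"
proof (cases "M1 + M2 = 0")
  case True then show ?thesis using ab by simp
next
  case False
  then have p: "M1 + M2 > 0" using M1_nonneg M2_nonneg by simp
  have "T \<le> b / (M1 + M2)" unfolding T_def by simp
  then show ?thesis using p by (simp add: le_divide_eq)
qed

definition MT where "MT = integral {0..T} gM"

definition kc where "kc = T * (L1 + 2 * L2 * MT)"

lemma MT_nonneg: "MT \<ge> 0" unfolding MT_def by (rule gM_int_nonneg)

lemma kc_nonneg: "kc \<ge> 0"
  unfolding kc_def using T_nonneg MT_nonneg L1 L2 by simp

lemma kc_lt1: "kc < 1"
proof (cases "T = 0")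
  case True then show ?thesis unfolding kc_def by simp
next
  case False
  then have T: "T > 0" using T_nonneg by simp
  have p: "L1 + 2 * L2 * M > 0" using L1 L2 M_nonneg by (smt (verit) mult_nonneg_nonneg)
  have "MT < M" unfolding MT_def by (rule M_strict[OF T])
  then have "kc < T * (L1 + 2 * L2 * M)" unfolding kc_def using T L2 by simp
  also have "T \<le> 1 / (L1 + 2 * L2 * M)" unfolding T_def by simp
  then have "T * (L1 + 2 * L2 * M) \<le> 1" using p by (simp add: le_divide_eq)
  finally show ?thesis .
qed

end



context setting begin

definition clamp :: "real \<Rightarrow> real" where "clamp t = max 0 (min T t)"

lemma clamp_in: "clamp t \<in> {0..T}" using T_nonneg by (auto simp: clamp_def)
lemma clamp_id: "t \<in> {0..T} \<Longrightarrow> clamp t = t" by (auto simp: clamp_def)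
lemma clamp_clamp: "clamp (clamp t) = clamp t" using clamp_id[OF clamp_in] .
lemma clamp_cont: "continuous_on UNIV clamp" unfolding clamp_def by (intro continuous_intros)

definition Phi :: "(real \<Rightarrow> 'n state) \<Rightarrow> real \<Rightarrow> 'n state" where
  "Phi y t = y0 + integral {0..t} (\<lambda>\<tau>. q (y \<tau>) + h t \<tau> y)"

lemma Q_cont: assumes y: "continuous_on UNIV y" and yb: "\<forall>t. y t \<in> cball y0 b"
  shows "continuous_on S (\<lambda>\<tau>. q (y \<tau>))"
  by (rule continuous_on_compose2[OF q_cont continuous_on_subset[OF y]]) (use yb in auto)

lemma integrand_int: assumes y: "continuous_on UNIV y" and yb: "\<forall>t. y t \<in> cball y0 b"
  shows "(\<lambda>\<tau>. q (y \<tau>) + h t \<tau> y) integrable_on {0..t}"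
  by (intro integrable_add integrable_continuous_interval Q_cont[OF y yb] h_int[OF y])

lemma Phi_cont: assumes y: "continuous_on UNIV y" and yb: "\<forall>t. y t \<in> cball y0 b"
  shows "continuous_on {0..T} (Phi y)"
proof -
  have qi: "(\<lambda>\<tau>. q (y \<tau>)) integrable_on {0..T}"
    by (intro integrable_continuous_interval Q_cont[OF y yb])
  have eq: "Phi y t = y0 + (integral {0..t} (\<lambda>\<tau>. q (y \<tau>)) + J y t)" for t
    unfolding Phi_def J_def
    by (subst integral_add) (auto intro: integrable_continuous_interval Q_cont[OF y yb] h_int[OF y])
  show ?thesis unfolding eq[abs_def]
    by (intro continuous_intros indefinite_integral_continuous_1[OF qi] J_cont[OF y T_nonneg])
qed

lemma Phi_ball: assumes y: "continuous_on UNIV y" and yb: "\<forall>t. y t \<in> cball y0 b" and t: "t \<in> {0..T}"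
  shows "Phi y t \<in> cball y0 b"
proof -
  have "norm (integral {0..t} (\<lambda>\<tau>. q (y \<tau>) + h t \<tau> y)) \<le> (t - 0) * (M1 + M2)"
  proof (rule norm_integral_const_bound[OF integrand_int[OF y yb]])
    fix \<tau> assume \<tau>: "\<tau> \<in> {0..t}"
    have "norm (q (y \<tau>) + h t \<tau> y) \<le> norm (q (y \<tau>)) + norm (h t \<tau> y)" by (rule norm_triangle_ineq)
    also have "\<dots> \<le> M1 + M2"
    proof (rule add_mono)
      show "norm (q (y \<tau>)) \<le> M1" using yb by (intro q_le_M1) (simp del: mem_cball)
      show "norm (h t \<tau> y) \<le> M2"
        by (rule h_le_M2) (use \<tau> t T_le_a yb continuous_on_subset[OF y] in \<open>auto simp: dist_norm norm_minus_commute\<close>)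
    qed
    finally show "norm (q (y \<tau>) + h t \<tau> y) \<le> M1 + M2" .
  qed (use t in auto)
  also have "\<dots> \<le> T * (M1 + M2)" using t M1_nonneg M2_nonneg by (intro mult_right_mono) auto
  also have "\<dots> \<le> b" by (rule T_ball)
  finally show ?thesis by (simp add: Phi_def dist_norm)
qed

lemma h_contr:
  assumes y1: "continuous_on UNIV y1" and yb1: "\<forall>t. y1 t \<in> cball y0 b"
    and y2: "continuous_on UNIV y2" and yb2: "\<forall>t. y2 t \<in> cball y0 b"
    and d: "\<And>s. norm (y1 s - y2 s) \<le> d"
    and tt: "0 \<le> \<tau>" "\<tau> \<le> t" "t \<le> T"
  shows "norm (h t \<tau> y1 - h t \<tau> y2) \<le> 2 * L2 * d * MT"
proof -
  have d0: "d \<ge> 0" using d[of 0] by (smt (verit) norm_ge_zero)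
  have c: "0 \<le> t - \<tau>" using tt by simp
  have eq: "h t \<tau> y1 - h t \<tau> y2 = integral {0..t-\<tau>} (\<lambda>r. F y1 \<tau> r - F y2 \<tau> r)"
    unfolding h_rep by (rule integral_diff[symmetric]) (use F_int[OF y1 c] F_int[OF y2 c] in auto)
  have "norm (integral {0..t-\<tau>} (\<lambda>r. F y1 \<tau> r - F y2 \<tau> r)) \<le> integral {0..t-\<tau>} (\<lambda>r. gM r * (L2 * (2 * d)))"
  proof (rule integral_norm_bound_integral)
    show "(\<lambda>r. F y1 \<tau> r - F y2 \<tau> r) integrable_on {0..t - \<tau>}"
      by (intro integrable_diff F_int y1 y2 c)
    show "(\<lambda>r. gM r * (L2 * (2 * d))) integrable_on {0..t - \<tau>}"
      using integrable_cmul[OF gM_int[OF c], of "L2 * (2 * d)"] by (simp add: mult.commute)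
    fix r assume r: "r \<in> {0..t - \<tau>}"
    show "norm (F y1 \<tau> r - F y2 \<tau> r) \<le> gM r * (L2 * (2 * d))"
    proof (cases "r = 0")
      case True then show ?thesis using gM_nonneg[of 0] L2 d0 by (simp add: F0)
    next
      case False
      then have rp: "r > 0" using r by simp
      have "norm (pfun D R (r + \<tau> - \<tau>) (y1 (r + \<tau>)) (y1 \<tau>) - pfun D R (r + \<tau> - \<tau>) (y2 (r + \<tau>)) (y2 \<tau>))
           \<le> sqrt (4 * D * (r + \<tau> - \<tau>)) * L2 * (norm (y1 (r + \<tau>) - y2 (r + \<tau>)) + norm (y1 \<tau> - y2 \<tau>))"
      proof (rule L2(2)[rule_format, of \<tau> "r + \<tau>" y1 y2])
        show "0 \<le> \<tau> \<and> \<tau> < r + \<tau> \<and> r + \<tau> \<le> a \<and> (\<forall>t\<in>{0..a}. y1 t \<in> cball y0 b \<and> y2 t \<in> cball y0 b)"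
          using rp tt r T_le_a yb1 yb2 by (simp del: mem_cball)
      qed
      then have pd: "norm (pfun D R r (y1 (r + \<tau>)) (y1 \<tau>) - pfun D R r (y2 (r + \<tau>)) (y2 \<tau>))
           \<le> sqrt (4 * D * r) * L2 * (norm (y1 (r + \<tau>) - y2 (r + \<tau>)) + norm (y1 \<tau> - y2 \<tau>))" by simp
      have "norm (F y1 \<tau> r - F y2 \<tau> r) = \<bar>C r\<bar> * norm (pfun D R r (y1 (r + \<tau>)) (y1 \<tau>) - pfun D R r (y2 (r + \<tau>)) (y2 \<tau>))"
        unfolding F_def by (simp only: scaleR_diff_right[symmetric] norm_scaleR real_norm_def)
      also have "\<dots> \<le> \<bar>C r\<bar> * (sqrt (4 * D * r) * L2 * (norm (y1 (r + \<tau>) - y2 (r + \<tau>)) + norm (y1 \<tau> - y2 \<tau>)))"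
        by (intro mult_left_mono pd) simp
      also have "\<dots> \<le> \<bar>C r\<bar> * (sqrt (4 * D * r) * L2 * (2 * d))"
      proof -
        have n: "norm (y1 (r + \<tau>) - y2 (r + \<tau>)) + norm (y1 \<tau> - y2 \<tau>) \<le> 2 * d"
          using d[of "r + \<tau>"] d[of \<tau>] by linarith
        have "0 \<le> sqrt (4 * D * r) * L2" using L2(1) pos rp by simp
        then have "sqrt (4 * D * r) * L2 * (norm (y1 (r + \<tau>) - y2 (r + \<tau>)) + norm (y1 \<tau> - y2 \<tau>)) \<le> sqrt (4 * D * r) * L2 * (2 * d)"
          by (rule mult_left_mono[OF n])
        then show ?thesis by (rule mult_left_mono) simp
      qed
      also have "\<dots> = gM r * (L2 * (2 * d))" by (simp only: gM_def mult.assoc)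
      finally show ?thesis .
    qed
  qed
  also have "\<dots> = integral {0..t-\<tau>} gM * (L2 * (2 * d))" by (rule integral_mult_left)
  also have "\<dots> \<le> MT * (L2 * (2 * d))"
    unfolding MT_def using L2 d0 gM_mono_int[of "t - \<tau>" T] tt by (intro mult_right_mono) auto
  finally show ?thesis unfolding eq by (simp add: mult_ac)
qed

lemma Phi_contr:
  assumes y1: "continuous_on UNIV y1" and yb1: "\<forall>t. y1 t \<in> cball y0 b"
    and y2: "continuous_on UNIV y2" and yb2: "\<forall>t. y2 t \<in> cball y0 b"
    and d: "\<And>s. norm (y1 s - y2 s) \<le> d"
    and t: "t \<in> {0..T}"
  shows "norm (Phi y1 t - Phi y2 t) \<le> kc * d"
proof -
  have d0: "d \<ge> 0" using d[of 0] by (smt (verit) norm_ge_zero)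
  have eq: "Phi y1 t - Phi y2 t = integral {0..t} (\<lambda>\<tau>. (q (y1 \<tau>) + h t \<tau> y1) - (q (y2 \<tau>) + h t \<tau> y2))"
    unfolding Phi_def by (simp add: integral_diff[OF integrand_int[OF y1 yb1] integrand_int[OF y2 yb2]])
  have "norm (integral {0..t} (\<lambda>\<tau>. (q (y1 \<tau>) + h t \<tau> y1) - (q (y2 \<tau>) + h t \<tau> y2))) \<le> (t - 0) * (L1 * d + 2 * L2 * d * MT)"
  proof (rule norm_integral_const_bound)
    show "(\<lambda>\<tau>. (q (y1 \<tau>) + h t \<tau> y1) - (q (y2 \<tau>) + h t \<tau> y2)) integrable_on {0..t}"
      by (intro integrable_diff integrand_int y1 y2 yb1 yb2)
    fix \<tau> assume \<tau>: "\<tau> \<in> {0..t}"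
    have "norm ((q (y1 \<tau>) + h t \<tau> y1) - (q (y2 \<tau>) + h t \<tau> y2)) \<le> norm (q (y1 \<tau>) - q (y2 \<tau>)) + norm (h t \<tau> y1 - h t \<tau> y2)"
      by (rule order_trans[OF _ norm_triangle_ineq]) (simp only: add_diff_add order_refl)
    also have "\<dots> \<le> L1 * d + 2 * L2 * d * MT"
    proof (rule add_mono)
      have "norm (q (y1 \<tau>) - q (y2 \<tau>)) \<le> L1 * norm (y1 \<tau> - y2 \<tau>)" using yb1 yb2 by (intro q_lip) (simp_all del: mem_cball)
      also have "\<dots> \<le> L1 * d" using d L1 by (intro mult_left_mono) auto
      finally show "norm (q (y1 \<tau>) - q (y2 \<tau>)) \<le> L1 * d" .
      show "norm (h t \<tau> y1 - h t \<tau> y2) \<le> 2 * L2 * d * MT"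
        by (rule h_contr[OF y1 yb1 y2 yb2 d]) (use \<tau> t in auto)
    qed
    finally show "norm ((q (y1 \<tau>) + h t \<tau> y1) - (q (y2 \<tau>) + h t \<tau> y2)) \<le> L1 * d + 2 * L2 * d * MT" .
  qed (use t in auto)
  also have "\<dots> \<le> T * (L1 * d + 2 * L2 * d * MT)"
    using t L1 L2 d0 MT_nonneg by (intro mult_right_mono) auto
  also have "\<dots> = kc * d" by (simp add: kc_def algebra_simps)
  finally show ?thesis unfolding eq .
qed

end



context setting begin

definition Sset :: "(real \<Rightarrow>\<^sub>C 'n state) set" where
  "Sset = {f. \<forall>t. apply_bcontfun f t \<in> cball y0 b \<and> apply_bcontfun f t = apply_bcontfun f (clamp t)}"

lemma ball_bcont:
  assumes c: "continuous_on UNIV g" and gb: "\<And>t. g t \<in> cball y0 b"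
  shows "g \<in> bcontfun"
proof (rule bcontfun_normI[OF c])
  fix t
  have "norm (g t) \<le> norm y0 + norm (g t - y0)" by (rule norm_triangle_sub)
  also have "norm (g t - y0) \<le> b" using gb[of t] by (simp add: dist_norm norm_minus_commute)
  finally show "norm (g t) \<le> norm y0 + b" by simp
qed

lemma Phi_clamp_bcont:
  assumes y: "continuous_on UNIV y" and yb: "\<forall>t. y t \<in> cball y0 b"
  shows "(\<lambda>t. Phi y (clamp t)) \<in> bcontfun"
proof (rule ball_bcont)
  show "continuous_on UNIV (\<lambda>t. Phi y (clamp t))"
    by (rule continuous_on_compose2[OF Phi_cont[OF y yb] clamp_cont]) (use clamp_in in auto)
  show "Phi y (clamp t) \<in> cball y0 b" for t by (rule Phi_ball[OF y yb clamp_in])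
qed

definition Op :: "(real \<Rightarrow>\<^sub>C 'n state) \<Rightarrow> (real \<Rightarrow>\<^sub>C 'n state)" where
  "Op f = Bcontfun (\<lambda>t. Phi (apply_bcontfun f) (clamp t))"

lemma Sset_ball: "f \<in> Sset \<Longrightarrow> \<forall>t. apply_bcontfun f t \<in> cball y0 b"
  by (simp add: Sset_def del: mem_cball)

lemma Op_apply: assumes "f \<in> Sset" shows "apply_bcontfun (Op f) t = Phi (apply_bcontfun f) (clamp t)"
  unfolding Op_def
  by (subst Bcontfun_inverse[OF Phi_clamp_bcont]) (use Sset_ball[OF assms] in auto)

lemma Op_Sset: assumes f: "f \<in> Sset" shows "Op f \<in> Sset"
  unfolding Sset_def
proof (intro CollectI allI conjI)
  fix t
  show "apply_bcontfun (Op f) t \<in> cball y0 b"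
    unfolding Op_apply[OF f] by (rule Phi_ball[OF _ Sset_ball[OF f] clamp_in]) simp
  show "apply_bcontfun (Op f) t = apply_bcontfun (Op f) (clamp t)"
    unfolding Op_apply[OF f] clamp_clamp ..
qed

lemma Op_contr: assumes f: "f \<in> Sset" and g: "g \<in> Sset"
  shows "dist (Op f) (Op g) \<le> kc * dist f g"
proof (rule dist_bound)
  fix t
  have "norm (Phi (apply_bcontfun f) (clamp t) - Phi (apply_bcontfun g) (clamp t)) \<le> kc * dist f g"
    by (rule Phi_contr[OF _ Sset_ball[OF f] _ Sset_ball[OF g] _ clamp_in])
       (use dist_bounded[of f _ g] in \<open>auto simp: dist_norm\<close>)
  then show "dist (apply_bcontfun (Op f) t) (apply_bcontfun (Op g) t) \<le> kc * dist f g"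
    by (simp add: Op_apply[OF f] Op_apply[OF g] dist_norm)
qed

lemma eval_cont: "continuous_on UNIV (\<lambda>f::real \<Rightarrow>\<^sub>C 'n state. apply_bcontfun f t)"
  unfolding continuous_on_iff
proof (intro ballI allI impI)
  fix x :: "real \<Rightarrow>\<^sub>C 'n state" and e :: real assume e: "0 < e"
  show "\<exists>d>0. \<forall>x'\<in>UNIV. dist x' x < d \<longrightarrow> dist (apply_bcontfun x' t) (apply_bcontfun x t) < e"
    using e dist_bounded le_less_trans by blast
qed

lemma Sset_closed: "closed Sset"
proof -
  have "Sset = (\<Inter>t. {f. dist y0 (apply_bcontfun f t) \<le> b}) \<inter> (\<Inter>t. {f. apply_bcontfun f t = apply_bcontfun f (clamp t)})"
    unfolding Sset_def by auto
  moreover have "closed \<dots>"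
    by (intro closed_Int closed_INT ballI closed_Collect_le closed_Collect_eq continuous_intros eval_cont)
  ultimately show ?thesis by simp
qed

lemma fixpoint: "\<exists>!f\<in>Sset. Op f = f"
proof (rule Banach_fix)
  show "complete Sset" using Sset_closed by (simp add: complete_eq_closed)
  have "const_bcontfun y0 \<in> Sset"
    unfolding Sset_def using ab by (simp add: const_bcontfun.rep_eq)
  then show "Sset \<noteq> {}" by blast
  show "0 \<le> kc" by (rule kc_nonneg)
  show "kc < 1" by (rule kc_lt1)
  show "Op ` Sset \<subseteq> Sset" using Op_Sset by blast
  show "dist (Op x) (Op y) \<le> kc * dist x y" if "x \<in> Sset" "y \<in> Sset" for x y
    by (rule Op_contr[OF that])
qed

end



context setting begin

lemma main:
  "\<exists>y. is_solution \<beta> \<sigma> \<gamma> \<xi> \<eta> D R T b y0 y \<and>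
             (\<forall>y'. is_solution \<beta> \<sigma> \<gamma> \<xi> \<eta> D R T b y0 y' \<longrightarrow> (\<forall>t\<in>{0..T}. y' t = y t))"
proof -
  obtain f where f: "f \<in> Sset" "Op f = f" and uniq: "\<And>g. g \<in> Sset \<Longrightarrow> Op g = g \<Longrightarrow> g = f"
    using fixpoint by blast
  define y where "y = apply_bcontfun f"
  have yc: "continuous_on UNIV y" unfolding y_def by simp
  have yb: "\<forall>t. y t \<in> cball y0 b" unfolding y_def by (rule Sset_ball[OF f(1)])
  have yfix: "y t = Phi y t" if "t \<in> {0..T}" for t
  proof -
    have "y t = apply_bcontfun (Op f) t" using f(2) by (simp add: y_def)
    also have "\<dots> = Phi y t" using Op_apply[OF f(1)] clamp_id[OF that] by (simp add: y_def)
    finally show ?thesis .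
  qed
  have sol: "is_solution \<beta> \<sigma> \<gamma> \<xi> \<eta> D R T b y0 y"
    unfolding is_solution_def
  proof (intro conjI ballI)
    show "continuous_on {0..T} y" using yc by (rule continuous_on_subset) simp
    fix t assume t: "t \<in> {0..T}"
    show "norm (y t - y0) \<le> b" using yb by (simp add: dist_norm norm_minus_commute)
    have "((\<lambda>\<tau>. q (y \<tau>) + h t \<tau> y) has_integral integral {0..t} (\<lambda>\<tau>. q (y \<tau>) + h t \<tau> y)) {0..t}"
      by (rule integrable_integral[OF integrand_int[OF yc yb]])
    moreover have "integral {0..t} (\<lambda>\<tau>. q (y \<tau>) + h t \<tau> y) = y t - y0"
      using yfix[OF t] by (simp add: Phi_def)
    ultimately show "((\<lambda>\<tau>. q (y \<tau>) + h t \<tau> y) has_integral (y t - y0)) {0..t}" by simp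
  qed
  have un: "\<forall>t\<in>{0..T}. y' t = y t" if y': "is_solution \<beta> \<sigma> \<gamma> \<xi> \<eta> D R T b y0 y'" for y'
  proof -
    have y'c: "continuous_on {0..T} y'" and y'b: "\<forall>t\<in>{0..T}. norm (y' t - y0) \<le> b"
      and y'i: "\<forall>t\<in>{0..T}. ((\<lambda>\<tau>. q (y' \<tau>) + h t \<tau> y') has_integral (y' t - y0)) {0..t}"
      using y' unfolding is_solution_def by auto
    define z where "z t = y' (clamp t)" for t
    have zc: "continuous_on UNIV z"
      unfolding z_def[abs_def] by (rule continuous_on_compose2[OF y'c clamp_cont]) (use clamp_in in auto)
    have zb: "z t \<in> cball y0 b" for t
      using y'b clamp_in[of t] by (auto simp: z_def dist_norm norm_minus_commute)
    have zin: "z \<in> bcontfun" by (rule ball_bcont[OF zc zb])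
    define g where "g = Bcontfun z"
    have ga: "apply_bcontfun g = z" unfolding g_def by (rule Bcontfun_inverse[OF zin])
    have zeq: "z s = y' s" if "s \<in> {0..T}" for s using clamp_id[OF that] by (simp add: z_def)
    have gS: "g \<in> Sset" using zb by (simp add: Sset_def ga z_def clamp_clamp del: mem_cball)
    have "Op g = g"
    proof (rule bcontfun_eqI)
      fix t
      define s where "s = clamp t"
      have s: "s \<in> {0..T}" unfolding s_def by (rule clamp_in)
      have "apply_bcontfun (Op g) t = Phi z s" using Op_apply[OF gS] by (simp add: ga s_def)
      also have "\<dots> = y0 + integral {0..s} (\<lambda>\<tau>. q (y' \<tau>) + h s \<tau> y')"
      proof -
        have "integral {0..s} (\<lambda>\<tau>. q (z \<tau>) + h s \<tau> z) = integral {0..s} (\<lambda>\<tau>. q (y' \<tau>) + h s \<tau> y')"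
        proof (rule integral_cong)
          fix \<tau> assume \<tau>: "\<tau> \<in> {0..s}"
          then have \<tau>T: "\<tau> \<in> {0..T}" using s by auto
          have "h s \<tau> z = h s \<tau> y'"
            unfolding hfun_def
          proof (rule integral_cong)
            fix x assume "x \<in> {\<tau>..s}"
            then have "x \<in> {0..T}" using \<tau> s by auto
            then show "C (x - \<tau>) *\<^sub>R pfun D R (x - \<tau>) (z x) (z \<tau>) = C (x - \<tau>) *\<^sub>R pfun D R (x - \<tau>) (y' x) (y' \<tau>)"
              using zeq \<tau>T by simp
          qed
          then show "q (z \<tau>) + h s \<tau> z = q (y' \<tau>) + h s \<tau> y'" using zeq[OF \<tau>T] by simp
        qed
        then show ?thesis by (simp add: Phi_def)
      qed
      also have "\<dots> = y' s" using integral_unique[OF y'i[rule_format, OF s]] by simp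
      also have "\<dots> = apply_bcontfun g t" by (simp add: ga z_def s_def)
      finally show "apply_bcontfun (Op g) t = apply_bcontfun g t" .
    qed
    then have "g = f" by (rule uniq[OF gS])
    show ?thesis
    proof
      fix t assume t: "t \<in> {0..T}"
      have "y' t = z t" using zeq[OF t] by simp
      also have "\<dots> = y t" using \<open>g = f\<close> ga by (simp add: y_def)
      finally show "y' t = y t" .
    qed
  qed
  show ?thesis using sol un by blast
qed

end

theorem theorem3p1:
  fixes \<beta> \<sigma> \<gamma> \<xi> \<eta> D R a b L1 L2 :: real
    and y0 :: "'n::finite state"
    and M1 M2 M T :: real
  assumes pos: "\<beta> > 0" "\<sigma> > 0" "\<gamma> > 0" "\<xi> > 0" "\<eta> > 0" "D > 0" "R > 0"
    and ab: "a > 0" "b > 0"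
    and L1: "L1 > 0"
      "\<forall>u\<in>cball y0 b. \<forall>v\<in>cball y0 b.
         norm (qfun \<beta> \<sigma> R u - qfun \<beta> \<sigma> R v) \<le> L1 * norm (u - v)"
    and L2: "L2 > 0"
      "\<forall>\<tau> s (y1 :: real \<Rightarrow> 'n state) y2.
         0 \<le> \<tau> \<and> \<tau> < s \<and> s \<le> a \<and> (\<forall>t\<in>{0..a}. y1 t \<in> cball y0 b \<and> y2 t \<in> cball y0 b) \<longrightarrow>
         norm (pfun D R (s - \<tau>) (y1 s) (y1 \<tau>) - pfun D R (s - \<tau>) (y2 s) (y2 \<tau>))
           \<le> sqrt (4 * D * (s - \<tau>)) * L2 * (norm (y1 s - y2 s) + norm (y1 \<tau> - y2 \<tau>))"
  and M1_def: "M1 =  Sup ((\<lambda>u. norm (qfun \<beta> \<sigma> R u)) ` cball y0 b)"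
    and M2_def: "M2 = Sup {norm (hfun \<gamma> \<xi> \<eta> D R t \<tau> y) | t \<tau> (y :: real \<Rightarrow> 'n state).
                   0 \<le> \<tau> \<and> \<tau> \<le> t \<and> t \<le> a \<and> continuous_on {0..a} y \<and>
                   (\<forall>s\<in>{0..a}. norm (y s - y0) \<le> b)}"
    and M_def: "M = integral {0..} (\<lambda>z. \<bar>Cfun \<gamma> \<xi> \<eta> D z\<bar> * sqrt (4 * D * z))"
    and T_def: "T = min a (min (b / (M1 + M2)) (1 / (L1 + 2 * L2 * M)))"
  shows "\<exists>y. is_solution \<beta> \<sigma> \<gamma> \<xi> \<eta> D R T b y0 y \<and>
             (\<forall>y'. is_solution \<beta> \<sigma> \<gamma> \<xi> \<eta> D R T b y0 y' \<longrightarrow> (\<forall>t\<in>{0..T}. y' t = y t))"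
proof -
  have "setting \<beta> \<sigma> \<gamma> \<xi> \<eta> D R a b L1 L2 y0 M1 M2 M T"
    by (rule setting.intro) (fact pos ab L1 L2 M1_def M2_def M_def T_def)+
  then show ?thesis by (rule setting.main)
qed



end
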